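(* Let $\mathcal{X}\subseteq\mathbb{R}^n$, $\mathcal{Z}=\mathcal{X}\times\mathcal{Y}$, $\rho$ a probability distribution on $\mathcal{Z}$, $d$ a metric on $\mathcal{X}$, $\mathcal{W}\subseteq\mathbb{R}^p$ compact, and $\ell:\mathcal{Z}\times\mathcal{W}\to\mathbb{R}^+$ differentiable in $x$ and convex with respect to the input, i.e. for all $x,x'\in\mathcal{X}$, $y\in\mathcal{Y}$, $w\in\mathcal{W}$, $$\ell((x',y),w)-\ell((x,y),w)\ge\langle\nabla_x\ell((x,y),w),x'-x\rangle.$$ Define $R^*_\epsilon=\inf_{w\in\mathcal{W}}\mathbb{E}_{(x,y)\sim\rho}\big[\sup_{x':d(x,x')\le\epsilon}\ell((x',y),w)\big]$. Then $$R^*_\epsilon\ge R^*_0+\inf_{w\in\mathcal{W}}\mathbb{E}_{z=(x,y)\sim\rho}\Big[\sup_{x':d(x,x')\le\epsilon}\langle\nabla_x\ell((x,y),w),x'-x\rangle\Big].$$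
   Context: $R^*_0=\inf_{w}\mathbb{E}_{z\sim\rho}\ell(z,w)$ is the optimal standard risk. *)

theory Defs
  imports "HOL-Probability.Probability"
begin

definition metric_on :: "'x set \<Rightarrow> ('x \<Rightarrow> 'x \<Rightarrow> real) \<Rightarrow> bool" where
  "metric_on X d \<longleftrightarrow>
     (\<forall>x\<in>X. \<forall>y\<in>X. 0 \<le> d x y \<and> (d x y = 0 \<longleftrightarrow> x = y) \<and> d x y = d y x) \<and>
     (\<forall>x\<in>X. \<forall>y\<in>X. \<forall>z\<in>X. d x z \<le> d x y + d y z)"

definition std_risk ::
  "('x \<times> 'y \<Rightarrow> 'w \<Rightarrow> real) \<Rightarrow> ('x \<times> 'y) measure \<Rightarrow> 'w set \<Rightarrow> ennreal" where
  "std_risk l M W = (INF w\<in>W. \<integral>\<^sup>+ z. ennreal (l z w) \<partial>M)"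

definition adv_risk ::
  "('x \<times> 'y \<Rightarrow> 'w \<Rightarrow> real) \<Rightarrow> ('x \<Rightarrow> 'x \<Rightarrow> real) \<Rightarrow> 'x set \<Rightarrow>
   ('x \<times> 'y) measure \<Rightarrow> 'w set \<Rightarrow> real \<Rightarrow> ennreal" where
  "adv_risk l d X M W eps =
     (INF w\<in>W. \<integral>\<^sup>+ z. (SUP x'\<in>{x'\<in>X. d (fst z) x' \<le> eps}. ennreal (l (x', snd z) w)) \<partial>M)"

definition grad_term ::
  "('x::real_inner \<Rightarrow> 'y \<Rightarrow> 'w \<Rightarrow> 'x) \<Rightarrow> ('x \<Rightarrow> 'x \<Rightarrow> real) \<Rightarrow> 'x set \<Rightarrow>
   ('x \<times> 'y) measure \<Rightarrow> 'w set \<Rightarrow> real \<Rightarrow> ennreal" where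
  "grad_term G d X M W eps =
     (INF w\<in>W. \<integral>\<^sup>+ z. (SUP x'\<in>{x'\<in>X. d (fst z) x' \<le> eps}.
          ennreal (inner (G (fst z) (snd z) w) (x' - fst z))) \<partial>M)"

end

theory Submission
  imports Defs
begin

lemma nn_superadd:
  fixes f g :: "'a \<Rightarrow> ennreal"
  shows "integral\<^sup>N M f + integral\<^sup>N M g \<le> (\<integral>\<^sup>+x. f x + g x \<partial>M)"
proof -
  let ?A = "{s. simple_function M s \<and> s \<le> f}"
  let ?B = "{t. simple_function M t \<and> t \<le> g}"
  have A: "?A \<noteq> {}" proof - have "(\<lambda>_. 0) \<in> ?A" by (auto simp: le_fun_def) then show ?thesis by blast qed
  have B: "?B \<noteq> {}" proof - have "(\<lambda>_. 0) \<in> ?B" by (auto simp: le_fun_def) then show ?thesis by blast qed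
  have "integral\<^sup>N M f + integral\<^sup>N M g = (SUP s\<in>?A. integral\<^sup>S M s + integral\<^sup>N M g)"
    unfolding nn_integral_def[of M f] using A by (simp add: ennreal_SUP_add_left)
  also have "\<dots> = (SUP s\<in>?A. SUP t\<in>?B. integral\<^sup>S M s + integral\<^sup>S M t)"
    unfolding nn_integral_def[of M g] using B by (simp add: ennreal_SUP_add_right)
  also have "\<dots> \<le> (\<integral>\<^sup>+x. f x + g x \<partial>M)"
  proof (intro SUP_least)
    fix s t assume s: "s \<in> ?A" and t: "t \<in> ?B"
    have "integral\<^sup>S M s + integral\<^sup>S M t = (\<integral>\<^sup>Sx. s x + t x \<partial>M)"
      using s t by (simp add: simple_integral_add)
    also have "\<dots> \<le> (\<integral>\<^sup>+x. f x + g x \<partial>M)"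
      unfolding nn_integral_def
      by (rule SUP_upper) (use s t in \<open>auto simp: le_fun_def intro: add_mono\<close>)
    finally show "integral\<^sup>S M s + integral\<^sup>S M t \<le> (\<integral>\<^sup>+x. f x + g x \<partial>M)" .
  qed
  finally show ?thesis .
qed
theorem theorem11:
  fixes X :: "'x::euclidean_space set" and Y :: "'y set"
    and M :: "('x \<times> 'y) measure"
    and d :: "'x \<Rightarrow> 'x \<Rightarrow> real"
    and W :: "'w::euclidean_space set"
    and l :: "'x \<times> 'y \<Rightarrow> 'w \<Rightarrow> real"
    and G :: "'x \<Rightarrow> 'y \<Rightarrow> 'w \<Rightarrow> 'x"
    and eps :: real
  assumes "prob_space M"
    and "space M \<subseteq> X \<times> Y"
    and "metric_on X d"
    and "compact W"
    and "\<And>z w. z \<in> X \<times> Y \<Longrightarrow> w \<in> W \<Longrightarrow> 0 \<le> l z w"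
    and "\<And>x y w. x \<in> X \<Longrightarrow> y \<in> Y \<Longrightarrow> w \<in> W \<Longrightarrow>
           ((\<lambda>x'. l (x', y) w) has_derivative (\<lambda>h. inner (G x y w) h)) (at x)"
    and "\<And>x x' y w. x \<in> X \<Longrightarrow> x' \<in> X \<Longrightarrow> y \<in> Y \<Longrightarrow> w \<in> W \<Longrightarrow>
           l (x', y) w - l (x, y) w \<ge> inner (G x y w) (x' - x)"
    and "0 \<le> eps"
  shows "adv_risk l d X M W eps \<ge> std_risk l M W + grad_term G d X M W eps"
proof -
  note a = assms
  let ?B = "\<lambda>x. {x'\<in>X. d x x' \<le> eps}"
  let ?SL = "\<lambda>z w. (SUP x'\<in>?B (fst z). ennreal (l (x', snd z) w))"
  let ?SG = "\<lambda>z w. (SUP x'\<in>?B (fst z). ennreal (inner (G (fst z) (snd z) w) (x' - fst z)))"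
  have pw: "ennreal (l z w) + ?SG z w \<le> ?SL z w" if z: "z \<in> X \<times> Y" and w: "w \<in> W" for z w
  proof -
    obtain x y where zxy: "z = (x, y)" and x: "x \<in> X" and y: "y \<in> Y" using z by auto
    have dxx: "d x x = 0" using x a(3) unfolding metric_on_def by blast
    have xB: "x \<in> ?B x" using x a(8) dxx by simp
    hence ne: "?B x \<noteq> {}" by blast
    have "ennreal (l z w) + ?SG z w
        = (SUP x'\<in>?B x. ennreal (l (x, y) w) + ennreal (inner (G x y w) (x' - x)))"
      using ne by (simp add: zxy ennreal_SUP_add_right)
    also have "\<dots> \<le> ?SL z w"
    proof (rule SUP_least)
      fix x' assume x': "x' \<in> ?B x"
      show "ennreal (l (x, y) w) + ennreal (inner (G x y w) (x' - x)) \<le> ?SL z w"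
      proof (cases "inner (G x y w) (x' - x) \<ge> 0")
        case True
        have "ennreal (l (x, y) w) + ennreal (inner (G x y w) (x' - x))
            = ennreal (l (x, y) w + inner (G x y w) (x' - x))"
          using True a(5)[of "(x,y)" w] x y w by (simp add: ennreal_plus)
        also have "\<dots> \<le> ennreal (l (x', y) w)"
          using a(7)[of x x' y w] x x' y w by (intro ennreal_leI) auto
        also have "\<dots> \<le> ?SL z w" using x' by (auto simp: zxy intro: SUP_upper)
        finally show ?thesis .
      next
        case False
        hence "ennreal (inner (G x y w) (x' - x)) = 0" by (simp add: ennreal_eq_0_iff)
        moreover have "ennreal (l (x, y) w) \<le> ?SL z w" using xB by (auto simp: zxy intro: SUP_upper)
        ultimately show ?thesis by simp
      qed
    qed
    finally show ?thesis .
  qed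
  have "std_risk l M W + grad_term G d X M W eps \<le> adv_risk l d X M W eps"
    unfolding adv_risk_def
  proof (rule INF_greatest)
    fix w assume w: "w \<in> W"
    have "std_risk l M W + grad_term G d X M W eps
        \<le> (\<integral>\<^sup>+ z. ennreal (l z w) \<partial>M) + (\<integral>\<^sup>+ z. ?SG z w \<partial>M)"
      unfolding std_risk_def grad_term_def
      by (intro add_mono INF_lower w)
    also have "\<dots> \<le> (\<integral>\<^sup>+ z. ennreal (l z w) + ?SG z w \<partial>M)" by (rule nn_superadd)
    also have "\<dots> \<le> (\<integral>\<^sup>+ z. ?SL z w \<partial>M)"
      by (rule nn_integral_mono) (use pw w a(2) in blast)
    finally show "std_risk l M W + grad_term G d X M W eps \<le> (\<integral>\<^sup>+ z. ?SL z w \<partial>M)" .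
  qed
  then show ?thesis by simp
qed

end
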